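(* Let $G$ be a finite loopless multigraph, let $\vec G$ be an orientation of $G$, let $a$ be a positive integer and let $\mathfrak f$ be a fraternal completion of $\vec G$ of depth $a$. Let $c:E(\vec G)\to[N]$ be a colouring of the edges such that $c(e_1)\ne c(e_2)$ for every conflict $(e_1,e_2)$ with $e_1\ne e_2$. Then every cycle $\gamma$ of $G$ receives at least $\min(|\gamma|,a+1)$ distinct colours.
   Context: Let $\vec G$ be a finite loopless directed multigraph and $a$ a positive integer. A fraternal completion of $\vec G$ of depth $a$ is a triple $\mathfrak f=((E_1,\dots,E_a),w,\kappa)$ such that: $E_1=E(\vec G)$; for $2\le i\le a$, $E_i$ is the arc set of a directed multigraph with vertex set $V(\vec G)$; the sets $E_1,\dots,E_a$ are pairwise disjoint (distinct arcs may have the same head and tail); writing $E_{\mathfrak f}=\bigcup_{1\le i\le a}E_i$, the weight $w(e)$ of $e\in E_{\mathfrak f}$ is the $i$ with $e\in E_i$; $\kappa$ maps each $e\in\bigcup_{1<i\le a}E_i$ to a pair $(f,g)\in E_{\mathfrak f}^2$ with ${\rm tail}(f)\ne{\rm tail}(g)$, $w(e)=w(f)+w(g)$, ${\rm tail}(e)={\rm tail}(f)$, ${\rm head}(e)={\rm tail}(g)$, ${\rm head}(f)={\rm head}(g)$; and conversely, for all $i,j$ with $i+j\le a$ and all $f\in E_i$, $g\in E_j$ with ${\rm tail}(f)\ne{\rm tail}(g)$ and ${\rm head}(f)={\rm head}(g)$, there is a unique $e\in E_{i+j}$ with $\kappa(e)\in\{(f,g),(g,f)\}$. Let $\prec$ be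 the partial order on $E_{\mathfrak f}$ obtained as the transitive closure of the relations $f\prec e$ and $g\prec e$ whenever $\kappa(e)=(f,g)$; $f\preceq e$ means $f\prec e$ or $f=e$. Let $\vec H_{\le a}$ be the directed multigraph with vertex set $V(\vec G)$ and arc set $E_{\mathfrak f}$. A pair $(e_1,e_2)$ of arcs of $\vec G$ is a conflict if there exist $f_1,f_2\in E_{\mathfrak f}$ with $f_1\succeq e_1$, $f_2\succeq e_2$, and a directed path of length at most $a$ in $\vec H_{\le a}$ whose first arc is $f_1$ and which ends at an endpoint of $f_2$ (possibly $f_1=f_2$). Cycles of $G$ include $2$-cycles formed by parallel edges; $|\gamma|$ is the number of edges of $\gamma$. *)

theory Defs
  imports Main
begin

definition loopless_digraph :: "'v set \<Rightarrow> 'e set \<Rightarrow> ('e \<Rightarrow> 'v) \<Rightarrow> ('e \<Rightarrow> 'v) \<Rightarrow> bool" where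
  "loopless_digraph V E tail head \<longleftrightarrow> finite V \<and> finite E \<and>
     (\<forall>e\<in>E. tail e \<in> V \<and> head e \<in> V \<and> tail e \<noteq> head e)"

definition comp_arcs :: "(nat \<Rightarrow> 'e set) \<Rightarrow> nat \<Rightarrow> 'e set" where
  "comp_arcs Es a = (\<Union>i\<in>{1..a}. Es i)"

definition comp_weight :: "(nat \<Rightarrow> 'e set) \<Rightarrow> nat \<Rightarrow> 'e \<Rightarrow> nat" where
  "comp_weight Es a e = (THE i. i \<in> {1..a} \<and> e \<in> Es i)"

text \<open>Fraternal completion ((E_1,...,E_a), w, kappa) of depth a of the digraph (V,E,tail,head).
 Arcs of all levels live in the type 'e and share the tail/head maps.\<close>
definition fraternal_completion ::
  "'v set \<Rightarrow> 'e set \<Rightarrow> ('e \<Rightarrow> 'v) \<Rightarrow> ('e \<Rightarrow> 'v) \<Rightarrow> nat \<Rightarrow> (nat \<Rightarrow> 'e set) \<Rightarrow> ('e \<Rightarrow> 'e \<times> 'e) \<Rightarrow> bool" where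
  "fraternal_completion V E tail head a Es \<kappa> \<longleftrightarrow>
     Es 1 = E \<and>
     (\<forall>i\<in>{2..a}. \<forall>e\<in>Es i. tail e \<in> V \<and> head e \<in> V) \<and>
     (\<forall>i\<in>{1..a}. \<forall>j\<in>{1..a}. i \<noteq> j \<longrightarrow> Es i \<inter> Es j = {}) \<and>
     (\<forall>e\<in>(\<Union>i\<in>{2..a}. Es i). \<exists>f g. \<kappa> e = (f, g) \<and>
         f \<in> comp_arcs Es a \<and> g \<in> comp_arcs Es a \<and>
         tail f \<noteq> tail g \<and>
         comp_weight Es a e = comp_weight Es a f + comp_weight Es a g \<and>
         tail e = tail f \<and> head e = tail g \<and> head f = head g) \<and>
     (\<forall>i j f g. 1 \<le> i \<and> 1 \<le> j \<and> i + j \<le> a \<and> f \<in> Es i \<and> g \<in> Es j \<and>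
         tail f \<noteq> tail g \<and> head f = head g \<longrightarrow>
         (\<exists>!e. e \<in> Es (i + j) \<and> (\<kappa> e = (f, g) \<or> \<kappa> e = (g, f))))"

definition prec_gen :: "(nat \<Rightarrow> 'e set) \<Rightarrow> nat \<Rightarrow> ('e \<Rightarrow> 'e \<times> 'e) \<Rightarrow> ('e \<times> 'e) set" where
  "prec_gen Es a \<kappa> = {(f, e). e \<in> (\<Union>i\<in>{2..a}. Es i) \<and> (f = fst (\<kappa> e) \<or> f = snd (\<kappa> e))}"

definition prec_eq :: "(nat \<Rightarrow> 'e set) \<Rightarrow> nat \<Rightarrow> ('e \<Rightarrow> 'e \<times> 'e) \<Rightarrow> 'e \<Rightarrow> 'e \<Rightarrow> bool" where
  "prec_eq Es a \<kappa> f e \<longleftrightarrow> (f, e) \<in> (prec_gen Es a \<kappa>)\<^sup>+ \<or> f = e"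

definition dipath :: "'e set \<Rightarrow> ('e \<Rightarrow> 'v) \<Rightarrow> ('e \<Rightarrow> 'v) \<Rightarrow> 'e list \<Rightarrow> bool" where
  "dipath A tail head p \<longleftrightarrow> p \<noteq> [] \<and> set p \<subseteq> A \<and>
     (\<forall>k. Suc k < length p \<longrightarrow> head (p ! k) = tail (p ! Suc k)) \<and>
     distinct (tail (p ! 0) # map head p)"

definition conflict ::
  "('e \<Rightarrow> 'v) \<Rightarrow> ('e \<Rightarrow> 'v) \<Rightarrow> nat \<Rightarrow> (nat \<Rightarrow> 'e set) \<Rightarrow> ('e \<Rightarrow> 'e \<times> 'e) \<Rightarrow> 'e \<Rightarrow> 'e \<Rightarrow> bool" where
  "conflict tail head a Es \<kappa> e1 e2 \<longleftrightarrow>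
     (\<exists>f1 f2 p. f1 \<in> comp_arcs Es a \<and> f2 \<in> comp_arcs Es a \<and>
        prec_eq Es a \<kappa> e1 f1 \<and> prec_eq Es a \<kappa> e2 f2 \<and>
        dipath (comp_arcs Es a) tail head p \<and> length p \<le> a \<and> p ! 0 = f1 \<and>
        head (last p) \<in> {tail f2, head f2})"

text \<open>A cycle of the underlying undirected multigraph, given by its list of edges es
 (length >= 2, so 2-cycles of parallel edges are included) and cyclic vertex list vs.\<close>
definition is_cycle :: "'e set \<Rightarrow> ('e \<Rightarrow> 'v) \<Rightarrow> ('e \<Rightarrow> 'v) \<Rightarrow> 'e list \<Rightarrow> bool" where
  "is_cycle E tail head es \<longleftrightarrow> 2 \<le> length es \<and> distinct es \<and> set es \<subseteq> E \<and>
     (\<exists>vs. length vs = length es \<and> distinct vs \<and>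
        (\<forall>i<length es. {tail (es ! i), head (es ! i)} = {vs ! i, vs ! ((i + 1) mod length es)}))"

end

theory Submission
  imports Defs
begin

lemma modinj: assumes "(r + i) mod (m::nat) = (r + j) mod m" "i < m" "j < m" shows "i = j"
proof -
  define s where "s = r mod m"
  have s: "s < m" using assms by (simp add: s_def)
  have e: "(s + i) mod m = (s + j) mod m" using assms(1) unfolding s_def by (metis mod_add_left_eq)
  have h: "(s + k) mod m = (if s + k < m then s + k else s + k - m)" if "k < m" for k
  proof (cases "s + k < m")
    case True then show ?thesis by simp
  next
    case False
    then have "(s + k) mod m = (s + k - m) mod m" by (simp add: le_mod_geq)
    also have "\<dots> = s + k - m" using s that by simp
    finally show ?thesis using False by simp
  qed
  show ?thesis using e h[OF assms(2)] h[OF assms(3)] assms(2,3) s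
    by (cases "s + i < m"; cases "s + j < m") auto
qed

lemma modsuc: "0 < (m::nat) \<Longrightarrow> (r + Suc i mod m) mod m = Suc ((r + i) mod m) mod m"
  by (metis add_Suc_right mod_Suc_eq mod_add_right_eq)

locale fc =
  fixes V :: "'v set" and E :: "'e set" and tail head :: "'e \<Rightarrow> 'v"
    and a :: nat and Es :: "nat \<Rightarrow> 'e set" and \<kappa> :: "'e \<Rightarrow> 'e \<times> 'e"
  assumes ll: "loopless_digraph V E tail head"
    and apos: "0 < a"
    and frat: "fraternal_completion V E tail head a Es \<kappa>"
begin

lemma Es_comp: "1 \<le> i \<Longrightarrow> i \<le> a \<Longrightarrow> f \<in> Es i \<Longrightarrow> f \<in> comp_arcs Es a"
  unfolding comp_arcs_def by auto


lemma frat4: "\<forall>e\<in>(\<Union>i\<in>{2..a}. Es i). \<exists>f g. \<kappa> e = (f, g) \<and>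
         f \<in> comp_arcs Es a \<and> g \<in> comp_arcs Es a \<and>
         tail f \<noteq> tail g \<and>
         comp_weight Es a e = comp_weight Es a f + comp_weight Es a g \<and>
         tail e = tail f \<and> head e = tail g \<and> head f = head g"
  using frat unfolding fraternal_completion_def by argo

lemma frat5: "\<forall>i j f g. 1 \<le> i \<and> 1 \<le> j \<and> i + j \<le> a \<and> f \<in> Es i \<and> g \<in> Es j \<and>
         tail f \<noteq> tail g \<and> head f = head g \<longrightarrow>
         (\<exists>!e. e \<in> Es (i + j) \<and> (\<kappa> e = (f, g) \<or> \<kappa> e = (g, f)))"
  using frat unfolding fraternal_completion_def by argo

lemma frat1: "Es 1 = E"
  using frat unfolding fraternal_completion_def by argo

lemma frat_merge:
  assumes "1 \<le> i" "1 \<le> j" "i + j \<le> a" "f \<in> Es i" "g \<in> Es j" "tail f \<noteq> tail g" "head f = head g"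
  obtains e where "e \<in> Es (i+j)" "(tail e = tail f \<and> head e = tail g) \<or> (tail e = tail g \<and> head e = tail f)"
    "(f, e) \<in> prec_gen Es a \<kappa>" "(g, e) \<in> prec_gen Es a \<kappa>"
proof -
  have "\<exists>!e. e \<in> Es (i + j) \<and> (\<kappa> e = (f, g) \<or> \<kappa> e = (g, f))"
    using frat5 assms by simp
  then obtain e where e: "e \<in> Es (i+j)" "\<kappa> e = (f,g) \<or> \<kappa> e = (g,f)" by (meson ex1_implies_ex)
  have eU: "e \<in> (\<Union>i\<in>{2..a}. Es i)" using e assms by auto
  then have "\<exists>f g. \<kappa> e = (f, g) \<and> tail e = tail f \<and> head e = tail g"
    using frat4 by blast
  then obtain f' g' where fg: "\<kappa> e = (f',g')" "tail e = tail f'" "head e = tail g'"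
    by blast
  have "(f, e) \<in> prec_gen Es a \<kappa>" "(g, e) \<in> prec_gen Es a \<kappa>"
    using eU e unfolding prec_gen_def by auto
  moreover have "(tail e = tail f \<and> head e = tail g) \<or> (tail e = tail g \<and> head e = tail f)"
    using e fg by auto
  ultimately show ?thesis using that e by blast
qed

lemma prec_eq_trans: "prec_eq Es a \<kappa> x f \<Longrightarrow> (f, e) \<in> prec_gen Es a \<kappa> \<Longrightarrow> prec_eq Es a \<kappa> x e"
  unfolding prec_eq_def by (meson trancl.r_into_trancl trancl_into_trancl)

lemma conflictI:
  assumes "f1 \<in> comp_arcs Es a" "f2 \<in> comp_arcs Es a" "prec_eq Es a \<kappa> x f1" "prec_eq Es a \<kappa> y f2"
    "dipath (comp_arcs Es a) tail head p" "length p \<le> a" "p ! 0 = f1" "head (last p) \<in> {tail f2, head f2}"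
  shows "conflict tail head a Es \<kappa> x y"
  unfolding conflict_def using assms by blast

lemma chain_dipath:
  assumes "gs \<noteq> []" "set gs \<subseteq> A" "length ws = Suc (length gs)" "distinct ws"
    "\<forall>t<length gs. tail (gs!t) = ws!t \<and> head (gs!t) = ws!Suc t"
  shows "dipath A tail head gs" "head (last gs) = last ws"
proof -
  have eq: "tail (gs!0) # map head gs = ws"
  proof (rule nth_equalityI)
    show "length (tail (gs ! 0) # map head gs) = length ws" using assms by simp
    fix t assume "t < length (tail (gs ! 0) # map head gs)"
    then show "(tail (gs ! 0) # map head gs) ! t = ws ! t"
      using assms by (cases t) auto
  qed
  show "dipath A tail head gs" unfolding dipath_def using assms eq by auto
  have "ws \<noteq> []" using assms(3) by auto
  then have "last ws = head (gs ! (length gs - 1))"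
    using assms(1,3,5) by (simp add: last_conv_nth)
  then show "head (last gs) = last ws" using assms(1) by (simp add: last_conv_nth)
qed


definition joins :: "'e \<Rightarrow> 'v \<Rightarrow> 'v \<Rightarrow> bool" where
  "joins f x y \<longleftrightarrow> (tail f = x \<and> head f = y) \<or> (tail f = y \<and> head f = x)"

definition piece :: "'e \<Rightarrow> 'e set \<Rightarrow> 'v \<Rightarrow> 'v \<Rightarrow> bool" where
  "piece f D x y \<longleftrightarrow> f \<in> Es (card D) \<and> 1 \<le> card D \<and> card D \<le> a \<and> joins f x y \<and>
     (\<forall>z\<in>D. prec_eq Es a \<kappa> z f)"

definition valid :: "'e list \<Rightarrow> 'e set list \<Rightarrow> 'v list \<Rightarrow> bool" where
  "valid fs Ds us \<longleftrightarrow> length fs = length us \<and> length Ds = length us \<and> 2 \<le> length us \<and> distinct us \<and>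
     (\<forall>i<length us. piece (fs!i) (Ds!i) (us!i) (us!(Suc i mod length us))) \<and>
     (\<forall>i<length us. \<forall>j<length us. i \<noteq> j \<longrightarrow> Ds!i \<inter> Ds!j = {})"

lemma validI:
  assumes "length fs = length us" "length Ds = length us" "2 \<le> length us" "distinct us"
    "\<And>i. i < length us \<Longrightarrow> piece (fs!i) (Ds!i) (us!i) (us!(Suc i mod length us))"
    "\<And>i j. i < length us \<Longrightarrow> j < length us \<Longrightarrow> i \<noteq> j \<Longrightarrow> Ds!i \<inter> Ds!j = {}"
  shows "valid fs Ds us"
  unfolding valid_def using assms by (intro conjI allI impI) auto

lemma valid_rotate:
  assumes "valid fs Ds us"
  shows "valid (rotate r fs) (rotate r Ds) (rotate r us)"
proof -
  let ?m = "length us"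
  have m: "0 < ?m" using assms unfolding valid_def by auto
  have P: "\<And>i. i < ?m \<Longrightarrow> piece (fs!i) (Ds!i) (us!i) (us!(Suc i mod ?m))"
    and D: "\<And>i j. i < ?m \<Longrightarrow> j < ?m \<Longrightarrow> i \<noteq> j \<Longrightarrow> Ds!i \<inter> Ds!j = {}"
    and L: "length fs = ?m" "length Ds = ?m" "2 \<le> ?m" "distinct us"
    using assms unfolding valid_def by auto
  have P': "piece (rotate r fs ! i) (rotate r Ds ! i) (rotate r us ! i) (rotate r us ! (Suc i mod ?m))"
    if "i < ?m" for i
  proof -
    have "Suc i mod ?m < ?m" using m by simp
    then have "rotate r us ! (Suc i mod ?m) = us ! ((r + Suc i mod ?m) mod ?m)"
      by (simp only: nth_rotate)
    also have "\<dots> = us ! (Suc ((r + i) mod ?m) mod ?m)" using modsuc[OF m] by metis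
    finally have "rotate r us ! (Suc i mod ?m) = us ! (Suc ((r + i) mod ?m) mod ?m)" .
    moreover have "rotate r fs ! i = fs ! ((r+i) mod ?m)" "rotate r Ds ! i = Ds ! ((r+i) mod ?m)"
      "rotate r us ! i = us ! ((r+i) mod ?m)"
      using that L by (simp_all only: nth_rotate L)
    moreover have "(r+i) mod ?m < ?m" using m by (rule mod_less_divisor)
    ultimately show ?thesis using P[of "(r+i) mod ?m"] by (simp only:)
  qed
  have D': "rotate r Ds ! i \<inter> rotate r Ds ! j = {}" if "i < ?m" "j < ?m" "i \<noteq> j" for i j
  proof -
    have "(r+i) mod ?m \<noteq> (r+j) mod ?m" using modinj[of r i ?m j] that by auto
    moreover have "rotate r Ds ! i = Ds ! ((r+i) mod ?m)" "rotate r Ds ! j = Ds ! ((r+j) mod ?m)"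
      using that L by (simp_all only: nth_rotate L)
    moreover have "(r+i) mod ?m < ?m" "(r+j) mod ?m < ?m" using m by simp_all
    ultimately show ?thesis using D[of "(r+i) mod ?m" "(r+j) mod ?m"] by simp
  qed
  show ?thesis
  proof (rule validI)
    show "length (rotate r fs) = length (rotate r us)" "length (rotate r Ds) = length (rotate r us)"
      "2 \<le> length (rotate r us)" "distinct (rotate r us)" using L by simp_all
  next
    fix i assume "i < length (rotate r us)"
    then show "piece (rotate r fs ! i) (rotate r Ds ! i) (rotate r us ! i) (rotate r us ! (Suc i mod length (rotate r us)))"
      using P' by (simp only: length_rotate)
  next
    fix i j assume "i < length (rotate r us)" "j < length (rotate r us)" "i \<noteq> j"
    then show "rotate r Ds ! i \<inter> rotate r Ds ! j = {}" using D' by (simp only: length_rotate)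
  qed
qed


lemma validD:
  assumes "valid fs Ds us"
  shows "length fs = length us" "length Ds = length us" "2 \<le> length us" "distinct us"
    "\<And>i. i < length us \<Longrightarrow> piece (fs!i) (Ds!i) (us!i) (us!(Suc i mod length us))"
    "\<And>i j. i < length us \<Longrightarrow> j < length us \<Longrightarrow> i \<noteq> j \<Longrightarrow> Ds!i \<inter> Ds!j = {}"
  using assms unfolding valid_def by auto

lemma pieceD:
  assumes "piece f D x y"
  shows "f \<in> Es (card D)" "1 \<le> card D" "card D \<le> a" "joins f x y" "\<And>z. z \<in> D \<Longrightarrow> prec_eq Es a \<kappa> z f"
    "finite D" "f \<in> comp_arcs Es a"
  using assms unfolding piece_def
  by (auto intro: Es_comp simp: card_ge_0_finite)

lemma valid_merge:
  assumes v: "valid fs Ds us" and m3: "3 \<le> length us" and h0: "head (fs!0) = us!1" and h1: "head (fs!1) = us!1"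
    and w: "card (Ds!0) + card (Ds!1) \<le> a"
  shows "\<exists>fs' Ds' us'. valid fs' Ds' us' \<and> length us' < length us \<and> \<Union>(set Ds') = \<Union>(set Ds)"
proof -
  note V = validD[OF v]
  obtain u0 u1 ur where us: "us = u0 # u1 # ur" using m3
    by (metis Suc_le_length_iff numeral_3_eq_3 Suc_leD)
  obtain f0 f1 fr where fs: "fs = f0 # f1 # fr" using m3 V(1)
    by (metis Suc_le_length_iff numeral_3_eq_3 Suc_leD)
  obtain D0 D1 Dr where Ds: "Ds = D0 # D1 # Dr" using m3 V(2)
    by (metis Suc_le_length_iff numeral_3_eq_3 Suc_leD)
  let ?m = "length us"
  have lur: "1 \<le> length ur" using m3 us by simp
  have urne: "ur \<noteq> []" using lur by (cases ur) auto
  have lfr: "length fr = length ur" "length Dr = length ur" using V(1,2) fs Ds us by auto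
  have p0: "piece f0 D0 u0 u1" using V(5)[of 0] us fs Ds m3 by simp
  have two: "Suc (Suc 0) mod Suc (Suc (length ur)) = Suc (Suc 0)" using lur by (intro mod_less) (cases ur, auto)
  have p1: "piece f1 D1 u1 (ur!0)" using V(5)[of 1] us fs Ds m3 two by simp
  have dist: "distinct (u0 # u1 # ur)" using V(4) us by simp
  have u02: "u0 \<noteq> ur!0" using dist lur by (metis distinct.simps(2) list.set_intros(2) nth_mem not_one_le_zero less_le_trans zero_less_one)
  have u01: "u0 \<noteq> u1" "u1 \<noteq> ur!0" using dist lur by (auto, metis nth_mem not_one_le_zero less_le_trans zero_less_one)
  have t0: "tail f0 = u0" using pieceD(4)[OF p0] h0 fs us u01 unfolding joins_def by auto
  have t1: "tail f1 = ur!0" using pieceD(4)[OF p1] h1 fs us u01 unfolding joins_def by auto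
  have hh: "head f0 = head f1" using h0 h1 fs by simp
  obtain e where e: "e \<in> Es (card D0 + card D1)"
    "(tail e = tail f0 \<and> head e = tail f1) \<or> (tail e = tail f1 \<and> head e = tail f0)"
    "(f0, e) \<in> prec_gen Es a \<kappa>" "(f1, e) \<in> prec_gen Es a \<kappa>"
    using frat_merge[OF pieceD(2)[OF p0] pieceD(2)[OF p1] _ pieceD(1)[OF p0] pieceD(1)[OF p1]] w Ds t0 t1 u02 hh
    by auto
  have disj01: "D0 \<inter> D1 = {}" using V(6)[of 0 1] Ds m3 us by simp
  have cardU: "card (D0 \<union> D1) = card D0 + card D1"
    using card_Un_disjoint[OF pieceD(6)[OF p0] pieceD(6)[OF p1] disj01] .
  let ?fs = "e # fr" and ?Ds = "(D0 \<union> D1) # Dr" and ?us = "u0 # ur"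
  have newp0: "piece e (D0 \<union> D1) u0 (ur!0)"
    unfolding piece_def joins_def
  proof (intro conjI ballI)
    show "e \<in> Es (card (D0 \<union> D1))" using e cardU by simp
    show "1 \<le> card (D0 \<union> D1)" "card (D0 \<union> D1) \<le> a" using cardU pieceD(2)[OF p0] w Ds by auto
    show "tail e = u0 \<and> head e = ur ! 0 \<or> tail e = ur ! 0 \<and> head e = u0" using e t0 t1 by auto
    fix z assume "z \<in> D0 \<union> D1"
    then show "prec_eq Es a \<kappa> z e"
      using pieceD(5)[OF p0] pieceD(5)[OF p1] prec_eq_trans e by blast
  qed
  have valid': "valid ?fs ?Ds ?us"
  proof (rule validI)
    show "length ?fs = length ?us" "length ?Ds = length ?us" using lfr by simp_all
    show "2 \<le> length ?us" using lur by simp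
    show "distinct ?us" using dist by simp
  next
    fix i assume i: "i < length ?us"
    show "piece (?fs!i) (?Ds!i) (?us!i) (?us!(Suc i mod length ?us))"
    proof (cases i)
      case 0
      then show ?thesis using newp0 urne by simp
    next
      case (Suc k)
      have k: "k < length ur" using i Suc by simp
      have P: "piece (fs!(k+2)) (Ds!(k+2)) (us!(k+2)) (us!(Suc (k+2) mod ?m))"
        using V(5)[of "k+2"] k us by simp
      have "?us!(Suc i mod length ?us) = us!(Suc (k+2) mod ?m)"
      proof (cases "Suc (Suc k) < Suc (length ur)")
        case True
        then show ?thesis using Suc us by simp
      next
        case False
        then have "Suc k = length ur" using k by simp
        then show ?thesis using Suc us by simp
      qed
      then show ?thesis using P Suc fs Ds us by simp
    qed
  next
    fix i j assume ij: "i < length ?us" "j < length ?us" "i \<noteq> j"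
    show "?Ds!i \<inter> ?Ds!j = {}"
    proof (cases i)
      case 0
      then obtain l where l: "j = Suc l" using ij by (cases j) auto
      have "D0 \<inter> Dr!l = {}" "D1 \<inter> Dr!l = {}"
        using V(6)[of 0 "l+2"] V(6)[of 1 "l+2"] ij l us Ds by auto
      then show ?thesis using 0 l by auto
    next
      case (Suc k)
      show ?thesis
      proof (cases j)
        case 0
        have "D0 \<inter> Dr!k = {}" "D1 \<inter> Dr!k = {}"
          using V(6)[of 0 "k+2"] V(6)[of 1 "k+2"] ij Suc us Ds by auto
        then show ?thesis using 0 Suc by auto
      next
        case (Suc l)
        then show ?thesis using V(6)[of "k+2" "l+2"] ij \<open>i = Suc k\<close> us Ds by auto
      qed
    qed
  qed
  moreover have "length ?us < length us" using us by simp
  moreover have "\<Union>(set ?Ds) = \<Union>(set Ds)" using Ds by auto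
  ultimately show ?thesis by blast
qed


lemma suc_mod_ne: assumes "2 \<le> (m::nat)" "i < m" shows "Suc i mod m \<noteq> i"
proof (cases "Suc i < m")
  case False
  then have "Suc i = m" using assms by simp
  then show ?thesis using assms by simp
qed simp

lemma valid_loopless:
  assumes v: "valid fs Ds us" and i: "i < length us"
  shows "tail (fs!i) \<noteq> head (fs!i)"
proof -
  note V = validD[OF v]
  have "0 < length us" using V(3) by linarith
  then have lt: "Suc i mod length us < length us" by (rule mod_less_divisor)
  have "us!i \<noteq> us!(Suc i mod length us)"
    using nth_eq_iff_index_eq[OF V(4) i lt] suc_mod_ne[OF V(3) i] by simp
  then show ?thesis using pieceD(4)[OF V(5)[OF i]] unfolding joins_def by auto
qed

lemma conflict_single:
  assumes v: "valid fs Ds us" and i: "i < length us" and j: "j < length us"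
    and x: "x \<in> Ds!i" and y: "y \<in> Ds!j" and h: "head (fs!i) \<in> {tail (fs!j), head (fs!j)}"
  shows "conflict tail head a Es \<kappa> x y"
proof -
  note V = validD[OF v]
  have pi: "piece (fs!i) (Ds!i) (us!i) (us!(Suc i mod length us))" using V(5)[OF i] .
  have pj: "piece (fs!j) (Ds!j) (us!j) (us!(Suc j mod length us))" using V(5)[OF j] .
  have "dipath (comp_arcs Es a) tail head [fs!i]"
    unfolding dipath_def using pieceD(7)[OF pi] valid_loopless[OF v i] by simp
  then show ?thesis
    using conflictI[OF pieceD(7)[OF pi] pieceD(7)[OF pj] pieceD(5)[OF pi x] pieceD(5)[OF pj y], of "[fs!i]"]
      h apos by simp
qed

lemma conflict_fw:
  assumes v: "valid fs Ds us"
    and F: "\<forall>t<length us. tail (fs!t) = us!t \<and> head (fs!t) = us!(Suc t mod length us)"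
    and ij: "i < j" "j < length us" "j - i \<le> a" and x: "x \<in> Ds!i" and y: "y \<in> Ds!j"
  shows "conflict tail head a Es \<kappa> x y"
proof -
  note V = validD[OF v]
  let ?m = "length us"
  let ?gs = "map (nth fs) [i..<j]" and ?ws = "map (nth us) [i..<Suc j]"
  have pi: "piece (fs!i) (Ds!i) (us!i) (us!(Suc i mod ?m))" using ij by (intro V(5)) simp
  have pj: "piece (fs!j) (Ds!j) (us!j) (us!(Suc j mod ?m))" using ij by (intro V(5)) simp
  have sub: "set ?gs \<subseteq> comp_arcs Es a"
  proof
    fix g assume "g \<in> set ?gs"
    then obtain t where t0: "t \<in> {i..<j}" "g = fs!t" by auto
    then have t: "t < length us" "g = fs!t" using ij by auto
    then show "g \<in> comp_arcs Es a" using pieceD(7)[OF V(5)[OF t(1)]] by simp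
  qed
  have "inj_on (nth us) (set [i..<Suc j])" using ij by (intro inj_on_nth[OF V(4)]) auto
  then have dws: "distinct ?ws" unfolding distinct_map by (simp del: upt_Suc)
  have st: "\<forall>t<length ?gs. tail (?gs!t) = ?ws!t \<and> head (?gs!t) = ?ws!Suc t"
  proof (intro allI impI)
    fix t assume t: "t < length ?gs"
    then have tt: "i + t < ?m" "Suc (i + t) < ?m" using ij by auto
    have "Suc (i+t) mod ?m = Suc (i+t)" using tt by simp
    then show "tail (?gs!t) = ?ws!t \<and> head (?gs!t) = ?ws!Suc t"
      using F tt t by (simp del: upt_Suc)
  qed
  have ne: "?gs \<noteq> []" using ij by simp
  note C = chain_dipath[OF ne sub _ dws st]
  have "head (last ?gs) = us!j" using C(2) ij by simp
  moreover have "?gs ! 0 = fs!i" using ij by simp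
  ultimately show ?thesis
    using conflictI[OF pieceD(7)[OF pi] pieceD(7)[OF pj] pieceD(5)[OF pi x] pieceD(5)[OF pj y] C(1)]
      F ij by simp
qed

lemma modeq1: "1 \<le> (l::nat) \<Longrightarrow> l \<le> m \<Longrightarrow> 1 \<le> l' \<Longrightarrow> l' \<le> m \<Longrightarrow> l mod m = l' mod m \<Longrightarrow> l = l'"
  by (cases "l = m"; cases "l' = m") auto

lemma conflict_bw:
  assumes v: "valid fs Ds us"
    and B: "\<forall>t<length us. tail (fs!t) = us!(Suc t mod length us) \<and> head (fs!t) = us!t"
    and ij: "i < j" "j < length us" "j - i \<le> a" and x: "x \<in> Ds!i" and y: "y \<in> Ds!j"
  shows "conflict tail head a Es \<kappa> y x"
proof -
  note V = validD[OF v]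
  let ?m = "length us"
  let ?gs = "map (\<lambda>t. fs!(j - t)) [0..<j-i]" and ?ws = "map (\<lambda>t. us!(Suc (j - t) mod ?m)) [0..<Suc (j-i)]"
  have pi: "piece (fs!i) (Ds!i) (us!i) (us!(Suc i mod ?m))" using ij by (intro V(5)) simp
  have pj: "piece (fs!j) (Ds!j) (us!j) (us!(Suc j mod ?m))" using ij by (intro V(5)) simp
  have sub: "set ?gs \<subseteq> comp_arcs Es a"
  proof
    fix g assume "g \<in> set ?gs"
    then obtain t where t: "j - t < length us" "g = fs!(j - t)" using ij by auto
    then show "g \<in> comp_arcs Es a" using pieceD(7)[OF V(5)[OF t(1)]] by simp
  qed
  have m0: "0 < ?m" using ij by linarith
  have inj: "inj_on (\<lambda>t. us!(Suc (j - t) mod ?m)) {0..<Suc (j-i)}"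
  proof (rule inj_onI)
    fix t t' assume tt: "t \<in> {0..<Suc (j-i)}" "t' \<in> {0..<Suc (j-i)}"
      and eq: "us!(Suc (j - t) mod ?m) = us!(Suc (j - t') mod ?m)"
    have "Suc (j - t) mod ?m = Suc (j - t') mod ?m"
      using eq V(4) m0 by (simp add: nth_eq_iff_index_eq)
    then have "Suc (j - t) = Suc (j - t')"
      using modeq1[of "Suc (j - t)" ?m "Suc (j - t')"] tt ij by simp
    then show "t = t'" using tt ij by simp
  qed
  have dws: "distinct ?ws" unfolding distinct_map using inj by (simp del: upt_Suc)
  have st: "\<forall>t<length ?gs. tail (?gs!t) = ?ws!t \<and> head (?gs!t) = ?ws!Suc t"
  proof (intro allI impI)
    fix t assume t: "t < length ?gs"
    then have tt: "j - t < ?m" "t < j" using ij by auto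
    have e1: "Suc (j - Suc t) = j - t" using tt by simp
    have e2: "(j - t) mod ?m = j - t" using tt by simp
    show "tail (?gs!t) = ?ws!t \<and> head (?gs!t) = ?ws!Suc t"
      using B tt t e1 e2 by (simp del: upt_Suc)
  qed
  have ne: "?gs \<noteq> []" using ij by simp
  note C = chain_dipath[OF ne sub _ dws st]
  have "last ?ws = us!(Suc (j - (j - i)) mod ?m)" by (simp add: last_map)
  also have "\<dots> = us!(Suc i mod ?m)" using ij by simp
  finally have "head (last ?gs) = tail (fs!i)" using C(2) B ij by simp
  moreover have "?gs ! 0 = fs!j" using ij by simp
  ultimately show ?thesis
    using conflictI[OF pieceD(7)[OF pj] pieceD(7)[OF pi] pieceD(5)[OF pj y] pieceD(5)[OF pi x] C(1)]
      ij by simp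
qed


lemma no_sink_dir:
  assumes v: "valid fs Ds us"
    and ns: "\<forall>i<length us. \<not> (head (fs!i) = us!(Suc i mod length us) \<and> head (fs!(Suc i mod length us)) = us!(Suc i mod length us))"
  shows "(\<forall>t<length us. tail (fs!t) = us!t \<and> head (fs!t) = us!(Suc t mod length us)) \<or>
         (\<forall>t<length us. tail (fs!t) = us!(Suc t mod length us) \<and> head (fs!t) = us!t)"
proof -
  note V = validD[OF v]
  let ?m = "length us"
  have m2: "2 \<le> ?m" using V(3) .
  have J: "joins (fs!t) (us!t) (us!(Suc t mod ?m))" if "t < ?m" for t
    using pieceD(4)[OF V(5)[OF that]] .
  have NE: "us!t \<noteq> us!(Suc t mod ?m)" if "t < ?m" for t
  proof -
    have "0 < ?m" using m2 by linarith
    then have lt: "Suc t mod ?m < ?m" by (rule mod_less_divisor)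
    show ?thesis using nth_eq_iff_index_eq[OF V(4) that lt] suc_mod_ne[OF m2 that] by simp
  qed
  have FW: "tail (fs!t) = us!t \<and> head (fs!t) = us!(Suc t mod ?m)"
    if "t < ?m" "head (fs!t) = us!(Suc t mod ?m)" for t
    using J[OF that(1)] NE[OF that(1)] that(2) unfolding joins_def by auto
  have BW: "tail (fs!t) = us!(Suc t mod ?m) \<and> head (fs!t) = us!t"
    if "t < ?m" "head (fs!t) \<noteq> us!(Suc t mod ?m)" for t
    using J[OF that(1)] that(2) unfolding joins_def by auto
  show ?thesis
  proof (cases "head (fs!0) = us!(Suc 0 mod ?m)")
    case True
    have "t < ?m \<longrightarrow> head (fs!t) = us!(Suc t mod ?m)" for t
    proof (induction t)
      case 0 then show ?case using True by simp
    next
      case (Suc t)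
      show ?case
      proof
        assume St: "Suc t < ?m"
        then have t: "t < ?m" by simp
        have e: "Suc t mod ?m = Suc t" using St by simp
        have h: "head (fs!t) = us!(Suc t)" using Suc.IH t e by simp
        have "\<not> head (fs!(Suc t)) = us!(Suc t)" using ns t e h by auto
        then show "head (fs!(Suc t)) = us!(Suc (Suc t) mod ?m)"
          using J[OF St] unfolding joins_def by auto
      qed
    qed
    then show ?thesis using FW by blast
  next
    case False
    have m0: "0 < ?m" using m2 by linarith
    have h0: "head (fs!0) = us!0" using BW[of 0, OF m0 False] by simp
    have D: "d < ?m \<longrightarrow> head (fs!(?m - 1 - d)) \<noteq> us!(Suc (?m - 1 - d) mod ?m)" for d
    proof (induction d)
      case 0
      show ?case
      proof
        have "Suc (?m - 1 - 0) = ?m" using m2 by linarith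
        then have e: "Suc (?m - 1 - 0) mod ?m = 0" by simp
        have lt: "?m - 1 - 0 < ?m" using m2 by simp
        show "head (fs!(?m - 1 - 0)) \<noteq> us!(Suc (?m - 1 - 0) mod ?m)"
          using ns[rule_format, OF lt] e h0 by auto
      qed
    next
      case (Suc d)
      show ?case
      proof
        assume Sd: "Suc d < ?m"
        define i where "i = ?m - 1 - Suc d"
        have i: "i < ?m" "Suc i = ?m - 1 - d" "Suc i < ?m" using Sd m2 unfolding i_def by auto
        have e: "Suc i mod ?m = Suc i" using i by simp
        have "head (fs!(Suc i)) \<noteq> us!(Suc (Suc i) mod ?m)" using Suc.IH Sd i(2) by simp
        then have "head (fs!(Suc i)) = us!(Suc i)" using BW[OF i(3)] by simp
        then have "head (fs!i) \<noteq> us!(Suc i mod ?m)" using ns[rule_format, OF i(1)] e by auto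
        then show "head (fs!(?m - 1 - Suc d)) \<noteq> us!(Suc (?m - 1 - Suc d) mod ?m)" unfolding i_def .
      qed
    qed
    have "head (fs!t) \<noteq> us!(Suc t mod ?m)" if "t < ?m" for t
    proof -
      have "?m - 1 - (?m - 1 - t) = t" using that by simp
      moreover have "?m - 1 - t < ?m" using that by simp
      ultimately show ?thesis using D[of "?m - 1 - t"] by simp
    qed
    then show ?thesis using BW by blast
  qed
qed

definition pwc :: "'e set \<Rightarrow> bool" where
  "pwc C \<longleftrightarrow> (\<forall>x\<in>C. \<forall>y\<in>C. x \<noteq> y \<longrightarrow> conflict tail head a Es \<kappa> x y \<or> conflict tail head a Es \<kappa> y x)"

lemma sink_case:
  assumes v: "valid fs Ds us" and h0: "head (fs!0) = us!1" and h1: "head (fs!1) = us!1"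
    and alt: "length us = 2 \<or> a < card (Ds!0) + card (Ds!1)"
  shows "\<exists>C. C \<subseteq> \<Union>(set Ds) \<and> min (card (\<Union>(set Ds))) (a+1) \<le> card C \<and> pwc C"
proof -
  note V = validD[OF v]
  let ?C = "Ds!0 \<union> Ds!1"
  have l0: "0 < length us" "1 < length us" using V(3) by linarith+
  have "Ds!0 \<in> set Ds" "Ds!1 \<in> set Ds" using l0 V(2) by (metis nth_mem)+
  then have sub: "?C \<subseteq> \<Union>(set Ds)" by blast
  have p0: "piece (fs!0) (Ds!0) (us!0) (us!(Suc 0 mod length us))" using V(5)[OF l0(1)] .
  have p1: "piece (fs!1) (Ds!1) (us!1) (us!(Suc 1 mod length us))" using V(5)[OF l0(2)] .
  have pw: "pwc ?C"
    unfolding pwc_def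
  proof (intro ballI impI)
    fix x y assume x: "x \<in> ?C" and y: "y \<in> ?C" and "x \<noteq> y"
    obtain i where i: "i < length us" "x \<in> Ds!i" "head (fs!i) = us!1" using x h0 h1 l0 by blast
    obtain j where j: "j < length us" "y \<in> Ds!j" "head (fs!j) = us!1" using y h0 h1 l0 by blast
    show "conflict tail head a Es \<kappa> x y \<or> conflict tail head a Es \<kappa> y x"
      using conflict_single[OF v i(1) j(1) i(2) j(2)] i(3) j(3) by simp
  qed
  have disj: "Ds!0 \<inter> Ds!1 = {}" using V(6)[OF l0] by simp
  have cardC: "card ?C = card (Ds!0) + card (Ds!1)"
    using card_Un_disjoint[OF pieceD(6)[OF p0] pieceD(6)[OF p1] disj] .
  have "min (card (\<Union>(set Ds))) (a+1) \<le> card ?C"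
  proof (cases "length us = 2")
    case True
    then have "Ds = [Ds!0, Ds!1]" using V(2)
      by (metis (no_types, lifting) Suc_1 length_0_conv length_Suc_conv nth_Cons_0 nth_Cons_Suc One_nat_def)
    moreover have "\<Union>(set [Ds!0, Ds!1]) = ?C" by simp
    ultimately have "\<Union>(set Ds) = ?C" by metis
    then show ?thesis by simp
  next
    case False
    then show ?thesis using alt cardC by simp
  qed
  then show ?thesis using sub pw by blast
qed

lemma window:
  assumes v: "valid fs Ds us"
    and dir: "(\<forall>t<length us. tail (fs!t) = us!t \<and> head (fs!t) = us!(Suc t mod length us)) \<or>
         (\<forall>t<length us. tail (fs!t) = us!(Suc t mod length us) \<and> head (fs!t) = us!t)"
  shows "\<exists>C. C \<subseteq> \<Union>(set Ds) \<and> min (card (\<Union>(set Ds))) (a+1) \<le> card C \<and> pwc C"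
proof -
  note V = validD[OF v]
  let ?m = "length us"
  define k where "k = min ?m (a+1)"
  define C where "C = (\<Union>t\<in>{..<k}. Ds!t)"
  have km: "k \<le> ?m" "k \<le> a + 1" unfolding k_def by auto
  have fin: "finite (Ds!t)" if "t < ?m" for t using pieceD(6)[OF V(5)[OF that]] .
  have sub: "C \<subseteq> \<Union>(set Ds)" unfolding C_def
  proof (rule UN_least)
    fix t assume "t \<in> {..<k}"
    then have "Ds!t \<in> set Ds" using km V(2) by (metis lessThan_iff nth_mem order_less_le_trans)
    then show "Ds!t \<subseteq> \<Union>(set Ds)" by blast
  qed
  have cardC: "card C = (\<Sum>t<k. card (Ds!t))"
    unfolding C_def
    by (rule card_UN_disjoint) (use km fin V(6) in auto)
  have "min (card (\<Union>(set Ds))) (a+1) \<le> card C"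
  proof (cases "?m \<le> a + 1")
    case True
    then have "k = ?m" unfolding k_def by simp
    then have "C = \<Union>(set Ds)" unfolding C_def using V(2) by (auto simp: set_conv_nth)
    then show ?thesis by simp
  next
    case False
    then have k: "k = a + 1" unfolding k_def by simp
    have "(\<Sum>t<k. (1::nat)) \<le> (\<Sum>t<k. card (Ds!t))"
      by (rule sum_mono) (use km pieceD(2)[OF V(5)] in auto)
    then show ?thesis using cardC k by simp
  qed
  moreover have "pwc C"
    unfolding pwc_def
  proof (intro ballI impI)
    fix x y assume x: "x \<in> C" and y: "y \<in> C" and "x \<noteq> y"
    obtain i where i: "i < k" "x \<in> Ds!i" using x unfolding C_def by auto
    obtain j where j: "j < k" "y \<in> Ds!j" using y unfolding C_def by auto
    have im: "i < ?m" "j < ?m" using i j km by auto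
    show "conflict tail head a Es \<kappa> x y \<or> conflict tail head a Es \<kappa> y x"
    proof (cases i j rule: linorder_cases)
      case less
      have "j - i \<le> a" using j km by simp
      then show ?thesis using dir conflict_fw[OF v _ less im(2) _ i(2) j(2)]
        conflict_bw[OF v _ less im(2) _ i(2) j(2)] by blast
    next
      case equal
      then show ?thesis using conflict_single[OF v im i(2) j(2)] by simp
    next
      case greater
      have "i - j \<le> a" using i km by simp
      then show ?thesis using dir conflict_fw[OF v _ greater im(1) _ j(2) i(2)]
        conflict_bw[OF v _ greater im(1) _ j(2) i(2)] by blast
    qed
  qed
  ultimately show ?thesis using sub by blast
qed


lemma clique:
  "valid fs Ds us \<Longrightarrow> \<exists>C. C \<subseteq> \<Union>(set Ds) \<and> min (card (\<Union>(set Ds))) (a+1) \<le> card C \<and> pwc C"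
proof (induction "length us" arbitrary: fs Ds us rule: less_induct)
  case less
  note v = less.prems
  note V = validD[OF v]
  let ?m = "length us"
  have m0: "0 < ?m" using V(3) by linarith
  show ?case
  proof (cases "\<exists>i<?m. head (fs!i) = us!(Suc i mod ?m) \<and> head (fs!(Suc i mod ?m)) = us!(Suc i mod ?m)")
    case True
    then obtain i where i: "i < ?m" "head (fs!i) = us!(Suc i mod ?m)" "head (fs!(Suc i mod ?m)) = us!(Suc i mod ?m)"
      by blast
    let ?fs = "rotate i fs" and ?Ds = "rotate i Ds" and ?us = "rotate i us"
    have v2: "valid ?fs ?Ds ?us" using valid_rotate[OF v] .
    have l1: "1 < ?m" using V(3) by linarith
    have r0: "?fs!0 = fs!i" using m0 V(1) i(1) by (simp add: nth_rotate)
    have r1: "?fs!1 = fs!(Suc i mod ?m)" using l1 V(1) by (simp add: nth_rotate)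
    have r2: "?us!1 = us!(Suc i mod ?m)" using l1 by (simp add: nth_rotate)
    have h0: "head (?fs!0) = ?us!1" and h1: "head (?fs!1) = ?us!1" using r0 r1 r2 i by simp_all
    have U: "\<Union>(set ?Ds) = \<Union>(set Ds)" by simp
    show ?thesis
    proof (cases "3 \<le> ?m \<and> card (?Ds!0) + card (?Ds!1) \<le> a")
      case True
      then obtain fs' Ds' us' where m: "valid fs' Ds' us'" "length us' < length ?us" "\<Union>(set Ds') = \<Union>(set ?Ds)"
        using valid_merge[OF v2 _ h0 h1] by auto
      then show ?thesis using less.hyps[OF _ m(1)] U by simp
    next
      case False
      then have "length ?us = 2 \<or> a < card (?Ds!0) + card (?Ds!1)" using V(3) by auto
      then show ?thesis using sink_case[OF v2 h0 h1] U by simp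
    qed
  next
    case False
    then show ?thesis using window[OF v no_sink_dir[OF v]] by blast
  qed
qed

lemma init:
  assumes c: "is_cycle E tail head \<gamma>"
  shows "\<exists>us. valid \<gamma> (map (\<lambda>e. {e}) \<gamma>) us"
proof -
  obtain vs where vs: "length vs = length \<gamma>" "distinct vs"
    "\<forall>i<length \<gamma>. {tail (\<gamma> ! i), head (\<gamma> ! i)} = {vs ! i, vs ! ((i + 1) mod length \<gamma>)}"
    using c unfolding is_cycle_def by blast
  have g: "2 \<le> length \<gamma>" "distinct \<gamma>" "set \<gamma> \<subseteq> E" using c unfolding is_cycle_def by auto
  have lp: "\<forall>e\<in>E. tail e \<noteq> head e" using ll unfolding loopless_digraph_def by blast
  have "valid \<gamma> (map (\<lambda>e. {e}) \<gamma>) vs"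
  proof (rule validI)
    show "length \<gamma> = length vs" "length (map (\<lambda>e. {e}) \<gamma>) = length vs" "2 \<le> length vs" "distinct vs"
      using vs g by simp_all
  next
    fix i assume i: "i < length vs"
    then have iE: "\<gamma>!i \<in> E" using g vs by (metis nth_mem subsetD)
    have eq: "{tail (\<gamma> ! i), head (\<gamma> ! i)} = {vs ! i, vs ! (Suc i mod length vs)}" using vs i by simp
    have ne: "tail (\<gamma>!i) \<noteq> head (\<gamma>!i)" using lp iE by blast
    have j: "joins (\<gamma>!i) (vs!i) (vs ! (Suc i mod length vs))"
      using eq ne unfolding joins_def by (auto simp: doubleton_eq_iff)
    show "piece (\<gamma>!i) (map (\<lambda>e. {e}) \<gamma> ! i) (vs!i) (vs ! (Suc i mod length vs))"
      unfolding piece_def using i vs iE frat1 apos j by (auto simp: prec_eq_def)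
  next
    fix i j assume "i < length vs" "j < length vs" "i \<noteq> j"
    then show "map (\<lambda>e. {e}) \<gamma> ! i \<inter> map (\<lambda>e. {e}) \<gamma> ! j = {}"
      using g vs by (simp add: nth_eq_iff_index_eq)
  qed
  then show ?thesis by blast
qed

end

theorem mainTheorem9:
  fixes V :: "'v set" and E :: "'e set" and tail head :: "'e \<Rightarrow> 'v"
    and a N :: nat and Es :: "nat \<Rightarrow> 'e set" and \<kappa> :: "'e \<Rightarrow> 'e \<times> 'e"
    and c :: "'e \<Rightarrow> nat" and \<gamma> :: "'e list"
  assumes "loopless_digraph V E tail head"
    and "0 < a"
    and "fraternal_completion V E tail head a Es \<kappa>"
    and "\<forall>e\<in>E. c e \<in> {1..N}"
    and "\<forall>e1\<in>E. \<forall>e2\<in>E. conflict tail head a Es \<kappa> e1 e2 \<and> e1 \<noteq> e2 \<longrightarrow> c e1 \<noteq> c e2"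
    and "is_cycle E tail head \<gamma>"
  shows "min (length \<gamma>) (a + 1) \<le> card (c ` set \<gamma>)"
proof -
  interpret fc V E tail head a Es \<kappa> using assms(1-3) by unfold_locales
  obtain us where v: "valid \<gamma> (map (\<lambda>e. {e}) \<gamma>) us" using init[OF assms(6)] by blast
  have U: "\<Union>(set (map (\<lambda>e. {e}) \<gamma>)) = set \<gamma>" by auto
  have g: "distinct \<gamma>" "set \<gamma> \<subseteq> E" using assms(6) unfolding is_cycle_def by auto
  obtain C where C: "C \<subseteq> set \<gamma>" "min (card (set \<gamma>)) (a+1) \<le> card C" "pwc C"
    using clique[OF v] U by auto
  have inj: "inj_on c C"
  proof (rule inj_onI)
    fix x y assume xy: "x \<in> C" "y \<in> C" "c x = c y"
    show "x = y"
    proof (rule ccontr)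
      assume "x \<noteq> y"
      then have "conflict tail head a Es \<kappa> x y \<or> conflict tail head a Es \<kappa> y x"
        using C(3) xy unfolding pwc_def by blast
      moreover have "x \<in> E" "y \<in> E" using xy C(1) g by auto
      ultimately show False using assms(5) xy \<open>x \<noteq> y\<close> by metis
    qed
  qed
  have "card C = card (c ` C)" using card_image[OF inj] by simp
  also have "\<dots> \<le> card (c ` set \<gamma>)" using C(1) by (intro card_mono) auto
  finally show ?thesis using C(2) g distinct_card by fastforce
qed

end
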